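(* For every integer $n>2$, the Euclidean space $\mathbb R^n$ is strongly discrete homogeneous.
   Context: A subset $D$ of $X$ is discrete if each point of $X$ has a neighbourhood containing at most one point of $D$. A Hausdorff space $X$ is strongly discrete homogeneous (sDH) if for any two discrete subsets $A,B$ of $X$ and any bijection $f\colon A\to B$, $f$ extends to a homeomorphism of $X$ onto itself. *)

theory Defs
  imports "HOL-Analysis.Analysis"
begin

definition discrete_subset :: "'a::topological_space set \<Rightarrow> bool" where
  "discrete_subset D \<longleftrightarrow>
     (\<forall>x. \<exists>U. open U \<and> x \<in> U \<and> (\<forall>a\<in>U \<inter> D. \<forall>b\<in>U \<inter> D. a = b))"

definition strongly_discrete_homogeneous :: "'a::t2_space itself \<Rightarrow> bool" where
  "strongly_discrete_homogeneous _ \<longleftrightarrow>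
     (\<forall>(A::'a set) (B::'a set) f. discrete_subset A \<and> discrete_subset B \<and> bij_betw f A B \<longrightarrow>
        (\<exists>h g. homeomorphism (UNIV::'a set) (UNIV::'a set) h g \<and> (\<forall>x\<in>A. h x = f x)))"

end

theory Submission
  imports Defs
begin

lemma disc_finite:
  fixes D :: "'a::topological_space set"
  assumes "discrete_subset D" "compact C"
  shows "finite (D \<inter> C)"
proof -
  from assms(1) obtain U where U: "\<And>x. open (U x) \<and> x \<in> U x \<and> (\<forall>a\<in>U x \<inter> D. \<forall>b\<in>U x \<inter> D. a = b)"
    unfolding discrete_subset_def by metis
  have "C \<subseteq> (\<Union>x\<in>C. U x)" using U by blast
  then obtain F where F: "F \<subseteq> C" "finite F" "C \<subseteq> (\<Union>x\<in>F. U x)"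
    using compactE_image[OF assms(2), of C U] U by metis
  have "D \<inter> C \<subseteq> (\<Union>x\<in>F. D \<inter> U x)" using F by blast
  moreover have "finite (D \<inter> U x)" for x
  proof -
    have "D \<inter> U x \<subseteq> {a} \<or> D \<inter> U x = {}" if "a \<in> D \<inter> U x" for a using U[of x] that by blast
    then show ?thesis by (metis finite.emptyI finite_insert finite_subset subsetI)
  qed
  ultimately show ?thesis using F(2) by (meson finite_UN_I finite_subset)
qed

lemma disc_subset_closed:
  fixes D :: "'a::t1_space set"
  assumes "discrete_subset D" "E \<subseteq> D"
  shows "closed E"
  unfolding closed_def
proof (subst open_subopen, intro ballI)
  fix x assume xE: "x \<in> - E"
  from assms(1) obtain U where U: "open U" "x \<in> U" "\<forall>a\<in>U \<inter> D. \<forall>b\<in>U \<inter> D. a = b"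
    unfolding discrete_subset_def by metis
  show "\<exists>T. open T \<and> x \<in> T \<and> T \<subseteq> - E"
  proof (cases "U \<inter> E = {}")
    case True
    then have "U \<subseteq> - E" by auto
    then show ?thesis using U(1,2) by blast
  next
    case False
    then obtain e where e: "e \<in> U" "e \<in> E" by blast
    have sub: "U - {e} \<subseteq> - E"
    proof
      fix y assume y: "y \<in> U - {e}"
      show "y \<in> - E"
      proof
        assume "y \<in> E"
        then have "y = e" using U(3) y e assms(2) by blast
        then show False using y by simp
      qed
    qed
    have "x \<noteq> e" using e xE by auto
    then have "x \<in> U - {e}" using U(2) by simp
    moreover have "open (U - {e})" using U(1) by (simp add: open_Diff)
    ultimately show ?thesis using sub by blast
  qed
qed

lemma disc_countable:
  fixes D :: "'a::euclidean_space set"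
  assumes "discrete_subset D"
  shows "countable D"
proof -
  have "D = (\<Union>k::nat. D \<inter> cball 0 (real k))"
    by (auto simp: dist_norm) (meson real_arch_simple)
  moreover have "countable (D \<inter> cball 0 (real k))" for k
    using disc_finite[OF assms compact_cball] by (simp add: countable_finite)
  then have "countable (\<Union>k::nat. D \<inter> cball 0 (real k))" by (intro countable_UN) auto
  ultimately show ?thesis by metis
qed

lemma disc_image:
  assumes "discrete_subset B" "homeomorphism UNIV UNIV h g"
  shows "discrete_subset (g ` B)"
  unfolding discrete_subset_def
proof
  fix x
  from assms(1) obtain U where U: "open U" "h x \<in> U" "\<forall>a\<in>U \<inter> B. \<forall>b\<in>U \<inter> B. a = b"
    unfolding discrete_subset_def by metis
  have hc: "continuous_on UNIV h" and gh: "\<And>x. g (h x) = x" and hg: "\<And>y. h (g y) = y"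
    using assms(2) unfolding homeomorphism_def by auto
  have "open (h -` U)" using open_vimage[OF U(1) hc] .
  moreover have "\<forall>a\<in>(h -` U) \<inter> g ` B. \<forall>b\<in>(h -` U) \<inter> g ` B. a = b"
  proof (intro ballI)
    fix a b assume a: "a \<in> h -` U \<inter> g ` B" and b: "b \<in> h -` U \<inter> g ` B"
    then obtain a' b' where ab: "a = g a'" "a' \<in> B" "b = g b'" "b' \<in> B" by auto
    then have "h a = a'" "h b = b'" using hg by auto
    then have "a' \<in> U" "b' \<in> U" using a b by auto
    then have "a' = b'" using U(3) ab by blast
    then show "a = b" using ab by simp
  qed
  ultimately show "\<exists>V. open V \<and> x \<in> V \<and> (\<forall>a\<in>V \<inter> g ` B. \<forall>b\<in>V \<inter> g ` B. a = b)"
    using U(2) by blast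
qed


definition Inv :: "'a set \<Rightarrow> 'a set \<Rightarrow> ('a\<Rightarrow>'a) \<Rightarrow> ('a\<Rightarrow>'a) \<Rightarrow> 'a set \<Rightarrow> bool" where
 "Inv A B f h K \<longleftrightarrow> (\<forall>x\<in>K. (x\<in>A \<longrightarrow> h x = f x) \<and> (h x \<in> B \<longrightarrow> x \<in> A))"

lemma step:
  fixes h g :: "'a::euclidean_space \<Rightarrow> 'a"
  assumes dim: "2 \<le> DIM('a)" and dA: "discrete_subset A" and dB: "discrete_subset B"
    and bij: "bij_betw f A B" and hom: "homeomorphism UNIV UNIV h g"
    and K: "compact K" "connected (-K)" and inv: "Inv A B f h K"
  shows "\<exists>\<rho> \<psi> \<psi>'. r \<le> \<rho> \<and> K \<subseteq> cball 0 \<rho> \<and> homeomorphism UNIV UNIV \<psi> \<psi>' \<and> (\<forall>x\<in>K. \<psi> x = x)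
            \<and> Inv A B f (h \<circ> \<psi>) (cball 0 \<rho>)"
proof -
  have gh: "\<And>x. g (h x) = x" and hg: "\<And>y. h (g y) = y" using hom by (auto simp: homeomorphism_def)
  have injf: "inj_on f A" and fAB: "f ` A = B" using bij by (auto simp: bij_betw_def)
  define D where "D = g ` B"
  have dD: "discrete_subset D" using disc_image[OF dB hom] D_def by simp
  obtain \<rho>0 where \<rho>0: "\<rho>0 > 0" "\<And>x. x \<in> K \<Longrightarrow> norm x \<le> \<rho>0"
    using compact_imp_bounded[OF K(1)] by (auto simp: bounded_pos)
  define \<rho> where "\<rho> = max r \<rho>0"
  have \<rho>pos: "\<rho> > 0" using \<rho>0 \<rho>_def by auto
  have K\<rho>: "K \<subseteq> cball 0 \<rho>" using \<rho>0 \<rho>_def by fastforce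
  define X where "X = A \<inter> cball 0 \<rho> - K"
  have finX: "finite X" using disc_finite[OF dA compact_cball] X_def by (metis finite_Diff)
  define T where "T = (\<lambda>x. g (f x)) ` X"
  have finT: "finite T" using finX T_def by simp
  have TK: "T \<inter> K = {}"
  proof (rule ccontr)
    assume "T \<inter> K \<noteq> {}"
    then obtain x where x: "x \<in> X" "g (f x) \<in> K" using T_def by blast
    have xA: "x \<in> A" "x \<notin> K" using x X_def by auto
    have "f x \<in> B" using fAB xA by blast
    then have "h (g (f x)) \<in> B" by (simp add: hg)
    then have "g (f x) \<in> A" "h (g (f x)) = f (g (f x))" using inv x(2) unfolding Inv_def by auto
    then have "f x = f (g (f x))" by (simp add: hg)
    then have "x = g (f x)" using injf xA \<open>g (f x) \<in> A\<close> by (metis inj_on_def)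
    then show False using x xA by simp
  qed
  have TD: "T \<subseteq> D" using fAB X_def D_def T_def by auto
  define Dr where "Dr = D - (T \<union> cball 0 \<rho>)"
  have clDr: "closed Dr" using disc_subset_closed[OF dD] Dr_def by blast
  have cDr: "countable Dr" using disc_countable[OF dD] Dr_def by (meson Diff_subset countable_subset)
  define S where "S = -K - Dr"
  have openS: "open S" unfolding S_def using K(1) clDr
    by (simp add: compact_imp_closed open_Compl open_Diff)
  have connS: "connected S" unfolding S_def
    using connected_open_diff_countable[OF dim _ K(2) cDr] K(1)
    by (simp add: compact_imp_closed open_Compl)
  define E where "E = D \<inter> S"
  have "E \<subseteq> T \<union> (D \<inter> cball 0 \<rho>)" unfolding E_def S_def Dr_def by auto
  then have finE: "finite E" using disc_finite[OF dD compact_cball] finT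
    by (meson finite_UnI finite_subset)
  have TS: "T \<subseteq> S" using TK unfolding S_def Dr_def by auto
  have TE: "T \<subseteq> E" using TS TD E_def by auto
  define Far where "Far = {x. \<rho> < norm x} - D"
  have FarS: "Far \<subseteq> S" unfolding Far_def S_def Dr_def using K\<rho> by auto
  have infFar: "infinite Far"
  proof
    assume fin: "finite Far"
    obtain v :: 'a where v: "norm v = 1" using norm_Basis SOME_Basis by blast
    have "(\<lambda>t. t *\<^sub>R v) ` {\<rho>+1<..<\<rho>+2} \<subseteq> Far \<union> D" using v \<rho>pos by (auto simp: Far_def)
    moreover have "countable (Far \<union> D)" using fin disc_countable[OF dD] by (simp add: countable_finite)
    ultimately have "countable ((\<lambda>t. t *\<^sub>R v) ` {\<rho>+1<..<\<rho>+2})" using countable_subset by blast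
    moreover have "inj_on (\<lambda>t. t *\<^sub>R v) {\<rho>+1<..<\<rho>+2}" using v by (auto simp: inj_on_def)
    ultimately have "countable {\<rho>+1<..<\<rho>+2}" using countable_image_inj_on by blast
    then show False using uncountable_open_interval[of "\<rho>+1" "\<rho>+2"] by simp
  qed
  obtain P where P: "finite P" "card P = card (E - T)" "P \<subseteq> Far"
    using infinite_arbitrarily_large[OF infFar] by blast
  obtain p where p: "bij_betw p (E - T) P"
    using finite_same_card_bij[of "E - T" P] P finE by auto
  define src where "src d = (if d \<in> T then inv_into A f (h d) else p d)" for d
  have srcT: "src (g (f x)) = x" if "x \<in> X" for x
  proof -
    have "g (f x) \<in> T" using that T_def by auto
    then show ?thesis using that X_def injf by (simp add: src_def hg)
  qed
  have srcT': "\<exists>x\<in>X. d = g (f x) \<and> src d = x" if "d \<in> T" for d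
    using that srcT T_def by auto
  have XS: "X \<subseteq> S" unfolding X_def S_def Dr_def by auto
  have src_in: "src i \<in> S \<and> id i \<in> S" if "i \<in> E" for i
  proof (cases "i \<in> T")
    case True then show ?thesis using srcT' XS that E_def by fastforce
  next
    case False then have "src i = p i" by (simp add: src_def)
    moreover have "p i \<in> P" using p that False by (auto simp: bij_betw_def)
    ultimately show ?thesis using P FarS that E_def by auto
  qed
  have srcFar: "\<rho> < norm (src i)" if "i \<in> E" "i \<notin> T" for i
  proof -
    have "src i = p i" using that by (simp add: src_def)
    moreover have "p i \<in> P" using p that by (auto simp: bij_betw_def)
    ultimately show ?thesis using P Far_def by auto
  qed
  have srcX: "src i \<in> X" if "i \<in> T" for i using srcT' that by auto
  have pw: "pairwise (\<lambda>i j. (src i \<noteq> src j) \<and> (id i \<noteq> id j)) E"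
    unfolding pairwise_def
  proof (intro ballI impI conjI)
    fix i j assume ij: "i \<in> E" "j \<in> E" "i \<noteq> j"
    then show "id i \<noteq> id j" by simp
    show "src i \<noteq> src j"
    proof (cases "i \<in> T"; cases "j \<in> T")
      assume "i \<in> T" "j \<in> T" then show ?thesis using srcT' ij by metis
    next
      assume "i \<in> T" "j \<notin> T" then show ?thesis using srcX srcFar[of j] ij X_def by fastforce
    next
      assume "i \<notin> T" "j \<in> T" then show ?thesis using srcX srcFar[of i] ij X_def by fastforce
    next
      assume "i \<notin> T" "j \<notin> T"
      then have "src i = p i" "src j = p j" by (auto simp: src_def)
      then show ?thesis using p ij \<open>i \<notin> T\<close> \<open>j \<notin> T\<close> by (auto simp: bij_betw_def inj_on_def)
    qed
  qed
  have Sne: "S \<noteq> {}" using infFar FarS by auto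
  have aff: "UNIV \<subseteq> affine hull S" using affine_hull_open[OF openS Sne] by simp
  obtain \<psi> \<psi>' where psi: "homeomorphism UNIV UNIV \<psi> \<psi>'" "\<And>i. i \<in> E \<Longrightarrow> \<psi> (src i) = id i"
      "{x. \<not> (\<psi> x = x \<and> \<psi>' x = x)} \<subseteq> S"
    using homeomorphism_moving_points_exists[OF dim openS connS subset_UNIV finE src_in pw subset_UNIV aff connS]
    by metis
  have psi_inv: "\<And>x. \<psi>' (\<psi> x) = x" using psi(1) by (auto simp: homeomorphism_def)
  have psi_fix: "\<psi> x = x" if "x \<notin> S" for x using psi(3) that by blast
  have psiS: "\<psi> w \<in> S" if "w \<in> S" for w
  proof (rule ccontr)
    assume "\<psi> w \<notin> S"
    then have "\<psi>' (\<psi> w) = \<psi> w" using psi(3) by blast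
    then show False using psi_inv that \<open>\<psi> w \<notin> S\<close> by metis
  qed
  have KS: "K \<inter> S = {}" unfolding S_def by auto
  have "Inv A B f (h \<circ> \<psi>) (cball 0 \<rho>)"
    unfolding Inv_def
  proof (intro ballI conjI impI)
    fix w :: 'a assume w: "w \<in> cball 0 \<rho>"
    show "(h \<circ> \<psi>) w = f w" if "w \<in> A"
    proof (cases "w \<in> K")
      case True
      then have "\<psi> w = w" using psi_fix KS by blast
      then show ?thesis using inv True that unfolding Inv_def by simp
    next
      case False
      then have wX: "w \<in> X" using w that X_def by auto
      then have "g (f w) \<in> E" using TE T_def by auto
      then have "\<psi> (src (g (f w))) = g (f w)" using psi(2) by simp
      then have "\<psi> w = g (f w)" using srcT[OF wX] by simp
      then show ?thesis by (simp add: hg)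
    qed
    show "w \<in> A" if hB: "(h \<circ> \<psi>) w \<in> B"
    proof (cases "w \<in> K")
      case True
      then have "\<psi> w = w" using psi_fix KS by blast
      then show ?thesis using inv True hB unfolding Inv_def by auto
    next
      case False
      have "w \<notin> Dr" using w Dr_def by auto
      then have wS: "w \<in> S" using False S_def by auto
      define d where "d = \<psi> w"
      have "d \<in> D" using hB D_def d_def gh by (metis comp_apply image_eqI)
      then have dE: "d \<in> E" using psiS[OF wS] d_def E_def by auto
      have "\<psi> (src d) = \<psi> w" using psi(2)[OF dE] d_def by simp
      then have wsrc: "w = src d" using psi_inv by metis
      show ?thesis
      proof (cases "d \<in> T")
        case True then show ?thesis using wsrc srcX X_def by auto
      next
        case False then show ?thesis using wsrc srcFar[OF dE] w by auto
      qed
    qed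
  qed
  moreover have "r \<le> \<rho>" using \<rho>_def by simp
  moreover have "\<forall>x\<in>K. \<psi> x = x" using psi_fix KS by blast
  ultimately show ?thesis using K\<rho> psi(1) by blast
qed


lemma Inv_sym:
  assumes hom: "homeomorphism UNIV UNIV h g" and bij: "bij_betw f A B" and inv: "Inv A B f h K"
  shows "Inv B A (inv_into A f) g (h ` K)"
  unfolding Inv_def
proof (intro ballI conjI impI)
  have gh: "\<And>x. g (h x) = x" using hom by (auto simp: homeomorphism_def)
  fix y assume "y \<in> h ` K"
  then obtain x where x: "x \<in> K" "y = h x" by blast
  show "g y = inv_into A f y" if "y \<in> B"
  proof -
    have "x \<in> A" "h x = f x" using inv x that unfolding Inv_def by auto
    moreover have "inv_into A f (f x) = x" using bij \<open>x \<in> A\<close> by (simp add: bij_betw_def inv_into_f_f)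
    ultimately show ?thesis using x gh by metis
  qed
  show "y \<in> B" if "g y \<in> A"
  proof -
    have "x \<in> A" using that x gh by simp
    then have "h x = f x" using inv x unfolding Inv_def by auto
    then show ?thesis using x \<open>x \<in> A\<close> bij by (auto simp: bij_betw_def)
  qed
qed

lemma Inv_cong: "(\<And>x. x \<in> A \<Longrightarrow> f x = f' x) \<Longrightarrow> Inv A B f h K = Inv A B f' h K"
  unfolding Inv_def by auto

definition good where
  "good A B f s \<longleftrightarrow> (case s of (h, g, K) \<Rightarrow> homeomorphism UNIV UNIV h g \<and> compact K \<and> connected (-K) \<and> Inv A B f h K)"

lemma homeo_compl_connected:
  assumes "homeomorphism UNIV UNIV h g" "connected (- C)"
  shows "connected (- (h ` C))"
proof -
  have gh: "\<And>x. g (h x) = x" and hg: "\<And>y. h (g y) = y" using assms(1) by (auto simp: homeomorphism_def)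
  have "- (h ` C) = h ` (- C)"
  proof
    show "- h ` C \<subseteq> h ` (- C)"
    proof
      fix x assume "x \<in> - h ` C"
      then have "g x \<notin> C" using hg by (metis ComplD image_eqI)
      then show "x \<in> h ` (-C)" using hg by (metis ComplI image_eqI)
    qed
    show "h ` (-C) \<subseteq> - h ` C" using gh by auto (metis)
  qed
  moreover have "continuous_on (- C) h" using assms(1) unfolding homeomorphism_def
    by (meson continuous_on_subset subset_UNIV)
  ultimately show ?thesis using connected_continuous_image assms(2) by metis
qed

lemma double_step:
  fixes h g :: "'a::euclidean_space \<Rightarrow> 'a"
  assumes dim: "2 \<le> DIM('a)" and dA: "discrete_subset A" and dB: "discrete_subset B"
    and bij: "bij_betw f A B" and gd: "good A B f (h, g, K)"
  shows "\<exists>h' g' K'. good A B f (h', g', K') \<and> K \<subseteq> K' \<and> cball 0 r \<subseteq> K' \<and> cball 0 r \<subseteq> h' ` K'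
     \<and> (\<forall>x\<in>K. h' x = h x)"
proof -
  have hom: "homeomorphism UNIV UNIV h g" and K: "compact K" "connected (-K)" and inv: "Inv A B f h K"
    using gd by (auto simp: good_def)
  obtain \<rho> \<psi> \<psi>' where s1: "r \<le> \<rho>" "K \<subseteq> cball 0 \<rho>" "homeomorphism UNIV UNIV \<psi> \<psi>'"
     "\<forall>x\<in>K. \<psi> x = x" "Inv A B f (h \<circ> \<psi>) (cball 0 \<rho>)"
    using step[OF dim dA dB bij hom K inv, of r] by blast
  define h1 where "h1 = h \<circ> \<psi>"
  define g1 where "g1 = \<psi>' \<circ> g"
  have hom1: "homeomorphism UNIV UNIV h1 g1"
    unfolding h1_def g1_def using homeomorphism_compose[OF s1(3) hom] by simp
  have gh1: "\<And>x. g1 (h1 x) = x" and hg1: "\<And>y. h1 (g1 y) = y" using hom1 by (auto simp: homeomorphism_def)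
  have hom1': "homeomorphism UNIV UNIV g1 h1" using hom1 by (rule homeomorphism_symD)
  have bij': "bij_betw (inv_into A f) B A" using bij by (rule bij_betw_inv_into)
  define L where "L = h1 ` cball 0 \<rho>"
  have L: "compact L" "connected (-L)"
    unfolding L_def
    using compact_continuous_image[OF _ compact_cball] hom1 apply (meson continuous_on_subset homeomorphism_def subset_UNIV)
    using homeo_compl_connected[OF hom1] connected_complement_bounded_convex[OF bounded_cball convex_cball dim]
    by blast
  have invL: "Inv B A (inv_into A f) g1 L"
    unfolding L_def using Inv_sym[OF hom1 bij s1(5)[folded h1_def]] .
  obtain \<tau> \<phi> \<phi>' where s2: "r \<le> \<tau>" "L \<subseteq> cball 0 \<tau>" "homeomorphism UNIV UNIV \<phi> \<phi>'"
     "\<forall>x\<in>L. \<phi> x = x" "Inv B A (inv_into A f) (g1 \<circ> \<phi>) (cball 0 \<tau>)"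
    using step[OF dim dB dA bij' hom1' L invL, of r] by blast
  define g2 where "g2 = g1 \<circ> \<phi>"
  define h2 where "h2 = \<phi>' \<circ> h1"
  have hom2': "homeomorphism UNIV UNIV g2 h2"
    unfolding h2_def g2_def using homeomorphism_compose[OF s2(3) hom1'] by simp
  have hom2: "homeomorphism UNIV UNIV h2 g2" using hom2' by (rule homeomorphism_symD)
  have gh2: "\<And>x. g2 (h2 x) = x" and hg2: "\<And>y. h2 (g2 y) = y" using hom2 by (auto simp: homeomorphism_def)
  define K' where "K' = g2 ` cball 0 \<tau>"
  have inv2: "Inv A B (inv_into B (inv_into A f)) h2 K'"
    unfolding K'_def using Inv_sym[OF hom2' bij' s2(5)[folded g2_def]] .
  have inv2': "Inv A B f h2 K'"
    using inv2 Inv_cong[of A "inv_into B (inv_into A f)" f] inv_into_inv_into_eq[OF bij] by metis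
  have K': "compact K'" "connected (-K')"
    unfolding K'_def
    using compact_continuous_image[OF _ compact_cball] hom2 apply (meson continuous_on_subset homeomorphism_def subset_UNIV)
    using homeo_compl_connected[OF hom2'] connected_complement_bounded_convex[OF bounded_cball convex_cball dim]
    by blast
  have h2_h1: "h2 x = h1 x" if "x \<in> cball 0 \<rho>" for x
  proof -
    have "h1 x \<in> L" using that L_def by simp
    then have "g2 (h1 x) = x" using s2(4) g2_def gh1 by simp
    then show ?thesis using hg2 by metis
  qed
  have "cball 0 \<rho> \<subseteq> K'"
  proof
    fix x :: 'a assume x: "x \<in> cball 0 \<rho>"
    have "h1 x \<in> L" using x L_def by simp
    then have "h1 x \<in> cball 0 \<tau>" using s2(2) by blast
    moreover have "g2 (h1 x) = x" using \<open>h1 x \<in> L\<close> s2(4) g2_def gh1 by simp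
    ultimately show "x \<in> K'" unfolding K'_def by (metis image_eqI)
  qed
  moreover have "h2 ` K' = cball 0 \<tau>" unfolding K'_def using hg2 by (auto simp: image_comp)
  moreover have "\<forall>x\<in>K. h2 x = h x"
    using h2_h1 s1(2) s1(4) h1_def by auto
  moreover have "good A B f (h2, g2, K')" using hom2 K' inv2' by (simp add: good_def)
  ultimately show ?thesis using s1(1,2) s2(1) 
    by (intro exI[of _ h2] exI[of _ g2] exI[of _ K']) (auto simp: subset_iff)
qed


lemma sdh_general:
  fixes A B :: "'a::euclidean_space set"
  assumes dim: "2 \<le> DIM('a)" and dA: "discrete_subset A" and dB: "discrete_subset B"
    and bij: "bij_betw f A B"
  shows "\<exists>h g. homeomorphism UNIV UNIV h g \<and> (\<forall>x\<in>A. h x = f x)"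
proof -
  define P where "P s k s' \<longleftrightarrow> good A B f s' \<and> snd (snd s) \<subseteq> snd (snd s')
     \<and> cball 0 (real k) \<subseteq> snd (snd s') \<and> cball 0 (real k) \<subseteq> fst s' ` snd (snd s')
     \<and> (\<forall>x\<in>snd (snd s). fst s' x = fst s x)" for s :: "('a\<Rightarrow>'a) \<times> ('a\<Rightarrow>'a) \<times> 'a set" and k :: nat and s'
  have ex: "\<exists>s'. P s k s'" if "good A B f s" for s k
  proof -
    obtain h g K where s: "s = (h, g, K)" by (cases s) auto
    have gs: "good A B f (h, g, K)" using that s by simp
    obtain h' g' K' where "good A B f (h', g', K') \<and> K \<subseteq> K' \<and> cball 0 (real k) \<subseteq> K' \<and> cball 0 (real k) \<subseteq> h' ` K'
     \<and> (\<forall>x\<in>K. h' x = h x)"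
      using double_step[OF dim dA dB bij gs, of "real k"] by blast
    then have "P s k (h', g', K')" unfolding P_def s by simp
    then show ?thesis by blast
  qed
  define st where "st = rec_nat (id, id, {}) (\<lambda>k s. SOME s'. P s k s')"
  have st0: "st 0 = (id, id, {})" and stS: "\<And>k. st (Suc k) = (SOME s'. P (st k) k s')"
    by (simp_all add: st_def)
  have good0: "good A B f (id, id, {})"
    using homeomorphism_ident[of UNIV] by (simp add: good_def Inv_def id_def connected_UNIV)
  have goodk: "good A B f (st k)" for k
  proof (induction k)
    case 0 then show ?case using st0 good0 by simp
  next
    case (Suc k)
    then have "P (st k) k (st (Suc k))" using ex[OF Suc] stS by (metis someI_ex)
    then show ?case unfolding P_def by simp
  qed
  have Pk: "P (st k) k (st (Suc k))" for k using ex[OF goodk] stS by (metis someI_ex)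
  define hh where "hh k = fst (st k)" for k
  define gg where "gg k = fst (snd (st k))" for k
  define KK where "KK k = snd (snd (st k))" for k
  have homk: "homeomorphism UNIV UNIV (hh k) (gg k)" and invk: "Inv A B f (hh k) (KK k)" for k
    using goodk[of k] unfolding good_def hh_def gg_def KK_def by (auto split: prod.splits)
  have ghk: "gg k (hh k x) = x" and hgk: "hh k (gg k y) = y" for k x y
    using homk[of k] by (auto simp: homeomorphism_def)
  have step1: "KK k \<subseteq> KK (Suc k)" "\<forall>x\<in>KK k. hh (Suc k) x = hh k x"
     "cball 0 (real k) \<subseteq> KK (Suc k)" "cball 0 (real k) \<subseteq> hh (Suc k) ` KK (Suc k)" for k
    using Pk[of k] unfolding P_def hh_def KK_def by auto
  have mono: "KK k \<subseteq> KK m \<and> (\<forall>x\<in>KK k. hh m x = hh k x)" if "k \<le> m" for k m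
    using that
  proof (induction m rule: dec_induct)
    case base then show ?case by simp
  next
    case (step m) then show ?case using step1[of m] by auto
  qed
  define N where "N x = Suc (nat \<lceil>norm x\<rceil>)" for x :: 'a
  have inN: "x \<in> cball 0 (real (nat \<lceil>norm x\<rceil>))" for x :: 'a
    by (simp add: real_nat_ceiling_ge)
  have xKN: "x \<in> KK (N x)" for x using inN[of x] step1(3)[of "nat \<lceil>norm x\<rceil>"] unfolding N_def by blast
  have yhN: "y \<in> hh (N y) ` KK (N y)" for y using inN[of y] step1(4)[of "nat \<lceil>norm y\<rceil>"] unfolding N_def by blast
  define H where "H x = hh (N x) x" for x
  define G where "G y = gg (N y) y" for y
  have L1: "H x = hh k x" if "x \<in> KK k" for x k
  proof -
    define M where "M = max k (N x)"
    have "hh M x = hh k x" using mono[of k M] that M_def by auto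
    moreover have "hh M x = hh (N x) x" using mono[of "N x" M] xKN M_def by auto
    ultimately show ?thesis using H_def by simp
  qed
  have L2: "G y = gg k y" if yin: "y \<in> hh k ` KK k" for y k
  proof -
    obtain x where x: "x \<in> KK k" "y = hh k x" using yin by blast
    obtain x' where x': "x' \<in> KK (N y)" "y = hh (N y) x'" using yhN by blast
    define M where "M = max k (N y)"
    have "hh M x = y" using mono[of k M] x M_def by auto
    moreover have "hh M x' = y" using mono[of "N y" M] x' M_def by auto
    ultimately have "x = x'" using ghk by metis
    then show ?thesis using G_def x x' ghk by metis
  qed
  have GH: "G (H x) = x" for x
  proof -
    have "H x = hh (N x) x" by (simp add: H_def)
    then show ?thesis using L2[of "H x" "N x"] xKN ghk by simp
  qed
  have HG: "H (G y) = y" for y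
  proof -
    obtain x where x: "x \<in> KK (N y)" "y = hh (N y) x" using yhN by blast
    have "G y = gg (N y) y" using L2 yhN by blast
    moreover have "gg (N y) y = x" using x(2) ghk by metis
    ultimately have "G y = x" by simp
    then show ?thesis using L1[OF x(1)] x(2) by simp
  qed
  have UN: "(UNIV::'a set) = \<Union> (range (\<lambda>k::nat. ball 0 (real k)))"
    by (auto simp: dist_norm) (meson reals_Archimedean2)
  have contH: "continuous_on UNIV H"
  proof -
    have "continuous_on (ball 0 (real k)) H" for k
    proof -
      have "continuous_on (ball 0 (real k)) (hh (Suc k))"
        using homk by (meson continuous_on_subset homeomorphism_def subset_UNIV)
      moreover have "\<forall>x\<in>ball 0 (real k). hh (Suc k) x = H x"
        using L1 step1(3)[of k] by (metis ball_subset_cball subsetD)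
      ultimately show ?thesis using continuous_on_eq by blast
    qed
    then show ?thesis by (subst UN, intro continuous_on_open_Union) auto
  qed
  have contG: "continuous_on UNIV G"
  proof -
    have "continuous_on (ball 0 (real k)) G" for k
    proof -
      have "continuous_on (ball 0 (real k)) (gg (Suc k))"
        using homk by (meson continuous_on_subset homeomorphism_def subset_UNIV)
      moreover have "\<forall>x\<in>ball 0 (real k). gg (Suc k) x = G x"
        using L2 step1(4)[of k] by (metis ball_subset_cball subsetD)
      ultimately show ?thesis using continuous_on_eq by blast
    qed
    then show ?thesis by (subst UN, intro continuous_on_open_Union) auto
  qed
  have "homeomorphism UNIV UNIV H G"
    unfolding homeomorphism_def using GH HG contH contG by (auto) (metis rangeI)+
  moreover have "\<forall>x\<in>A. H x = f x"
  proof
    fix x assume "x \<in> A"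
    then show "H x = f x" using invk[of "N x"] xKN[of x] unfolding H_def Inv_def by auto
  qed
  ultimately show ?thesis by blast
qed

theorem mainTheorem9:
  assumes "CARD('n::finite) > 2"
  shows "strongly_discrete_homogeneous TYPE(real^'n)"
  unfolding strongly_discrete_homogeneous_def
proof (intro allI impI)
  fix A B :: "(real^'n) set" and f
  assume "discrete_subset A \<and> discrete_subset B \<and> bij_betw f A B"
  moreover have "2 \<le> DIM(real^'n)" using assms by simp
  ultimately show "\<exists>h g. homeomorphism (UNIV::(real^'n) set) UNIV h g \<and> (\<forall>x\<in>A. h x = f x)"
    using sdh_general by blast
qed

end
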